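(* There is an absolute constant $C>0$ such that the following holds. Let $\varepsilon\in(0,1)$, let $f:\mathbb R\to\mathbb R$ be $1$-smooth with $f\ge0$, and let $x_0\in\mathbb R$ satisfy $f(x_0)\le1$ and $f'(x_0)\le-\varepsilon$. Then DecreaseGap$(x_0)$ terminates using at most $C(1+\log(1/\varepsilon))$ oracle queries, and either it returns ("stationary", $z$) where $z$ is an $\varepsilon$-stationary point of $f$, or it returns ("base", $x$) where $f(x)\le f(x_0)$, $f'(x)\le-\varepsilon$ and $f(x+2/\varepsilon)\ge\frac34 f(x)$.
   Context: $f:\mathbb R\to\mathbb R$ is $1$-smooth if it is continuously differentiable and $f'$ is $1$-Lipschitz; $x$ is an $\varepsilon$-stationary point if $|f'(x)|<\varepsilon$. The oracle returns $(f(x),f'(x))$ on query $x$; values at already-queried points are reused. Subroutines (a recursive call's output is returned unchanged): BinarySearch$(x_0,x_1)$: $m=(x_0+x_1)/2$; if $|f'(m)|<\varepsilon$ return $m$; if $f'(m)\le-\varepsilon$ return BinarySearch$(m,x_1)$; if $f'(m)>0$ return BinarySearch$(x_0,m)$. DecreaseGap$(x_0)$: let $y=x_0+2/\varepsilon$; if $|f'(y)|<\varepsilon$ return ("stationary", $y$); else if $f'(y)>0$ return ("stationary", BinarySearch$(x_0,y)$); else if $f(y)\ge\frac34 f(x_0)$ return ("base", $x_0$); else return DecreaseGap$(y)$. *)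

theory Defs
  imports Complex_Main
begin

text \<open>The oracle for f returns (f x, f' x); the algorithms are parameterised by
  f and its derivative f'. Each run returns its output together with the SET of
  distinct points at which the oracle was queried (queries at already-queried
  points are reused, so the number of oracle queries is the cardinality of
  this set). Recursion is run with a fuel bound n; None means the fuel was
  exhausted, so termination means: Some result for some fuel.\<close>

datatype dg_result = Stationary real | Base real

fun bsearch :: "(real \<Rightarrow> real) \<Rightarrow> real \<Rightarrow> nat \<Rightarrow> real \<Rightarrow> real
                  \<Rightarrow> (real \<times> real set) option" where
  "bsearch f' eps 0 a b = None"
| "bsearch f' eps (Suc n) a b =
     (let m = (a + b) / 2 in
      if \<bar>f' m\<bar> < eps then Some (m, {m})
      else if f' m \<le> - eps then
        map_option (\<lambda>(z, Q). (z, insert m Q)) (bsearch f' eps n m b)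
      else if f' m > 0 then
        map_option (\<lambda>(z, Q). (z, insert m Q)) (bsearch f' eps n a m)
      else None)"

fun dgap :: "(real \<Rightarrow> real) \<Rightarrow> (real \<Rightarrow> real) \<Rightarrow> real \<Rightarrow> nat \<Rightarrow> real
               \<Rightarrow> (dg_result \<times> real set) option" where
  "dgap f f' eps 0 x = None"
| "dgap f f' eps (Suc n) x =
     (let y = x + 2 / eps in
      if \<bar>f' y\<bar> < eps then Some (Stationary y, {x, y})
      else if f' y > 0 then
        map_option (\<lambda>(z, Q). (Stationary z, {x, y} \<union> Q)) (bsearch f' eps n x y)
      else if f y \<ge> 3 / 4 * f x then Some (Base x, {x, y})
      else map_option (\<lambda>(r, Q). (r, insert x Q)) (dgap f f' eps n y))"

end

theory Submission
  imports Defs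
begin

lemma lower_bound:
  fixes f f' :: "real \<Rightarrow> real"
  assumes der: "\<forall>x. (f has_real_derivative f' x) (at x)"
    and lip: "\<forall>x y. \<bar>f' x - f' y\<bar> \<le> \<bar>x - y\<bar>"
    and nn: "\<forall>x. f x \<ge> 0" and d: "f' x < 0"
  shows "f x \<ge> (f' x)^2 / 4"
proof -
  define h where "h = - f' x / 2"
  have hp: "0 < h" using d h_def by simp
  obtain z where z: "x < z" "z < x + h" "f (x+h) - f x = (x + h - x) * f' z"
    using MVT2[of x "x+h" f f'] hp der by auto
  have "f' z - f' x \<le> \<bar>z - x\<bar>" using lip by (metis abs_ge_self order_trans)
  hence "f' z \<le> f' x + h" using z by simp
  hence "f' z \<le> f' x / 2" using h_def by simp
  hence "h * f' z \<le> h * (f' x / 2)" using hp by (simp add: mult_left_mono)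
  moreover have "f (x+h) = f x + h * f' z" using z(3) by simp
  ultimately have "f (x+h) \<le> f x + h * (f' x / 2)" by linarith
  moreover have "h * (f' x / 2) = - ((f' x) ^ 2 / 4)" using h_def by (simp add: power2_eq_square)
  ultimately show ?thesis using nn[rule_format, of "x+h"] by simp
qed

lemma bsearch_ok:
  fixes f' :: "real \<Rightarrow> real"
  assumes lip: "\<forall>x y. \<bar>f' x - f' y\<bar> \<le> \<bar>x - y\<bar>" and ep: "0 < eps"
  shows "a < b \<Longrightarrow> f' a \<le> - eps \<Longrightarrow> f' b \<ge> eps \<Longrightarrow> b - a < 2 * eps * 2^k \<Longrightarrow> k \<le> n \<Longrightarrow>
    \<exists>z Q. bsearch f' eps n a b = Some (z, Q) \<and> \<bar>f' z\<bar> < eps \<and> finite Q \<and> card Q \<le> k"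
proof (induction n arbitrary: a b k)
  case 0
  have "2 * eps \<le> \<bar>b - a\<bar>" using lip[rule_format, of b a] 0 by simp
  then show ?case using 0 by simp
next
  case (Suc n)
  have "2 * eps \<le> \<bar>b - a\<bar>" using lip[rule_format, of b a] Suc.prems by simp
  hence k0: "k \<noteq> 0" using Suc.prems by (cases k) auto
  then obtain j where kj: "k = Suc j" by (cases k) auto
  define m where "m = (a + b) / 2"
  have ab: "a < b" using \<open>2 * eps \<le> \<bar>b - a\<bar>\<close> Suc.prems ep by auto
  have half: "(b - a) / 2 < 2 * eps * 2^j" using Suc.prems(4) kj by simp
  have jn: "j \<le> n" using Suc.prems kj by simp
  show ?case
  proof (cases "\<bar>f' m\<bar> < eps")
    case True
    then show ?thesis using kj by (simp add: m_def[symmetric] Let_def)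
  next
    case F1: False
    show ?thesis
    proof (cases "f' m \<le> - eps")
      case True
      have bm: "b - m < 2 * eps * 2^j" using half m_def by simp
      have mb: "m < b" using ab m_def by simp
      obtain z Q where zq: "bsearch f' eps n m b = Some (z, Q)" "\<bar>f' z\<bar> < eps" "finite Q" "card Q \<le> j"
        using Suc.IH[OF mb True Suc.prems(3) bm jn] by blast
      have "card (insert m Q) \<le> k" using zq kj by (simp add: card_insert_if)
      then show ?thesis using F1 True zq by (simp add: m_def[symmetric] Let_def)
    next
      case F2: False
      hence pos: "f' m > 0" "f' m \<ge> eps" using F1 by auto
      have bm: "m - a < 2 * eps * 2^j" using half m_def by simp
      have mb: "a < m" using ab m_def by simp
      obtain z Q where zq: "bsearch f' eps n a m = Some (z, Q)" "\<bar>f' z\<bar> < eps" "finite Q" "card Q \<le> j"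
        using Suc.IH[OF mb Suc.prems(2) pos(2) bm jn] by blast
      have "card (insert m Q) \<le> k" using zq kj by (simp add: card_insert_if)
      then show ?thesis using F1 F2 pos zq by (simp add: m_def[symmetric] Let_def)
    qed
  qed
qed

lemma dgap_ok:
  fixes f f' :: "real \<Rightarrow> real"
  assumes der: "\<forall>x. (f has_real_derivative f' x) (at x)"
    and lip: "\<forall>x y. \<bar>f' x - f' y\<bar> \<le> \<bar>x - y\<bar>"
    and nn: "\<forall>x. f x \<ge> 0" and ep: "0 < eps"
    and KK: "2 / eps < 2 * eps * 2^K"
  shows "f' x \<le> - eps \<Longrightarrow> f x < eps^2/4 * (4/3)^k \<Longrightarrow> k + K \<le> n \<Longrightarrow>
    \<exists>r Q. dgap f f' eps n x = Some (r, Q) \<and> finite Q \<and> card Q \<le> k + K + 2 \<and>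
       (case r of Stationary z \<Rightarrow> \<bar>f' z\<bar> < eps
        | Base x' \<Rightarrow> f x' \<le> f x \<and> f' x' \<le> - eps \<and> f (x' + 2 / eps) \<ge> 3 / 4 * f x')"
proof (induction n arbitrary: x k)
  case 0
  have "f x \<ge> (f' x)^2/4" using lower_bound[OF der lip nn] 0 ep by simp
  moreover have "eps^2 \<le> (f' x)^2" using 0 ep
    using power_mono[of eps "- f' x" 2] by simp
  ultimately show ?case using 0 by simp
next
  case (Suc n)
  have "f x \<ge> (f' x)^2/4" using lower_bound[OF der lip nn] Suc.prems ep by simp
  moreover have "eps^2 \<le> (f' x)^2" using Suc.prems ep
    using power_mono[of eps "- f' x" 2] by simp
  ultimately have "k \<noteq> 0" using Suc.prems by (cases k) auto
  then obtain j where kj: "k = Suc j" by (cases k) auto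
  define y where "y = x + 2 / eps"
  show ?case
  proof (cases "\<bar>f' y\<bar> < eps")
    case True
    then show ?thesis by (simp add: y_def[symmetric] Let_def card_insert_if)
  next
    case F1: False
    show ?thesis
    proof (cases "f' y > 0")
      case True
      have "f' y \<ge> eps" using True F1 by auto
      moreover have "y - x < 2 * eps * 2^K" using KK y_def by simp
      moreover have "K \<le> n" using Suc.prems kj by simp
      moreover have "x < y" using y_def ep by simp
      ultimately obtain z Q where zq: "bsearch f' eps n x y = Some (z, Q)" "\<bar>f' z\<bar> < eps" "finite Q" "card Q \<le> K"
        using bsearch_ok[OF lip ep _ Suc.prems(1)] by blast
      have "card ({x, y} \<union> Q) \<le> card {x,y} + card Q" by (rule card_Un_le)
      also have "card {x,y} \<le> 2" by (simp add: card_insert_if)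
      finally have "card ({x, y} \<union> Q) \<le> k + K + 2" using zq by simp
      then show ?thesis using F1 True zq by (simp add: y_def[symmetric] Let_def)
    next
      case F2: False
      hence ny: "f' y \<le> - eps" using F1 by auto
      show ?thesis
      proof (cases "f y \<ge> 3 / 4 * f x")
        case True
        then show ?thesis using F1 F2 Suc.prems
          by (simp add: y_def[symmetric] Let_def card_insert_if)
      next
        case F3: False
        have "f y < 3/4 * f x" using F3 by simp
        also have "\<dots> < 3/4 * (eps^2/4 * (4/3)^k)" using Suc.prems by simp
        also have "\<dots> = eps^2/4 * (4/3)^j" using kj by simp
        finally have fy: "f y < eps^2/4 * (4/3)^j" .
        have "j + K \<le> n" using Suc.prems kj by simp
        then obtain r Q where rq: "dgap f f' eps n y = Some (r, Q)" "finite Q" "card Q \<le> j + K + 2"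
          "(case r of Stationary z \<Rightarrow> \<bar>f' z\<bar> < eps
        | Base x' \<Rightarrow> f x' \<le> f y \<and> f' x' \<le> - eps \<and> f (x' + 2 / eps) \<ge> 3 / 4 * f x')"
          using Suc.IH[OF ny fy] by blast
        have c: "card (insert x Q) \<le> k + K + 2" using rq kj by (simp add: card_insert_if)
        have fyx: "f y \<le> f x" using F3 nn[rule_format, of x] by linarith
        have "(case r of Stationary z \<Rightarrow> \<bar>f' z\<bar> < eps
        | Base x' \<Rightarrow> f x' \<le> f x \<and> f' x' \<le> - eps \<and> f (x' + 2 / eps) \<ge> 3 / 4 * f x')"
          using rq(4) fyx by (cases r) auto
        then show ?thesis using F1 F2 F3 rq c by (simp add: y_def[symmetric] Let_def)
      qed
    qed
  qed
qed

lemma main_bound: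
  fixes eps :: real
  assumes e0: "0 < eps" and e1: "eps < 1"
  shows "\<exists>k K. 1 < eps^2/4 * (4/3)^k \<and> 2 / eps < 2 * eps * 2^K \<and>
     real (k + K + 2) \<le> 20 * (1 + ln (1 / eps))"
proof -
  define L where "L = ln (1/eps)"
  have L0: "L \<ge> 0" using e0 e1 L_def by simp
  have eL: "exp L = 1/eps" using e0 L_def by simp
  have l43: "ln (4/3::real) \<ge> 1/4"
    using ln_le_minus_one[of "3/4::real"] ln_div[of 3 4] ln_div[of 4 3] by simp
  have l2: "ln (2::real) \<ge> 1/2"
    using ln_le_minus_one[of "1/2::real"] ln_div[of 1 2] by simp
  have l4: "ln (4::real) \<le> 3" using ln_le_minus_one[of "4::real"] by simp
  have l4p: "ln (4::real) \<ge> 0" by simp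
  define a where "a = (ln 4 + 2*L) / ln (4/3)"
  have a0: "a \<ge> 0" using a_def L0 l43 l4p by simp
  define k where "k = nat \<lceil>a\<rceil> + 1"
  have ka: "real k > a" "real k \<le> a + 2" using a0 k_def by linarith+
  define b where "b = 2*L / ln 2"
  have b0: "b \<ge> 0" using b_def L0 l2 by simp
  define K where "K = nat \<lceil>b\<rceil> + 1"
  have Kb: "real K > b" "real K \<le> b + 2" using b0 K_def by linarith+
  have "real k * ln (4/3) > a * ln (4/3)" using ka l43 by (simp add: mult_strict_right_mono)
  also have "a * ln (4/3) = ln 4 + 2*L" using a_def l43 by simp
  finally have "exp (ln 4 + 2*L) < exp (real k * ln (4/3::real))" by simp
  also have "\<dots> = (4/3)^k" using exp_of_nat_mult[of k "ln (4/3::real)"] by simp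
  also have "exp (ln 4 + 2*L) = 4 * (1/eps)^2"
  proof -
    have "exp (ln 4 + 2*L) = exp (ln 4) * exp (2*L)" by (rule exp_add)
    also have "exp (2*L) = (1/eps)^2"
    proof -
      have "exp (2*L) = exp (L + L)" by (metis mult_2)
      also have "\<dots> = exp L * exp L" by (rule exp_add)
      finally show ?thesis using eL by (simp add: power2_eq_square)
    qed
    finally show ?thesis by simp
  qed
  finally have i1: "4 * (1/eps)^2 < (4/3::real)^k" .
  have i1': "1 < eps^2/4 * (4/3)^k"
  proof -
    have "eps^2/4 * (4 * (1/eps)^2) = 1" using e0 by (simp add: field_simps)
    moreover have "eps^2/4 * (4 * (1/eps)^2) < eps^2/4 * (4/3)^k"
      using i1 e0 by (intro mult_strict_left_mono) auto
    ultimately show ?thesis by simp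
  qed
  have "real K * ln 2 > b * ln 2" using Kb l2 by (simp add: mult_strict_right_mono)
  also have "b * ln 2 = 2*L" using b_def l2 by simp
  finally have "exp (2*L) < exp (real K * ln (2::real))" by simp
  also have "\<dots> = 2^K" using exp_of_nat_mult[of K "ln (2::real)"] by simp
  also have "exp (2*L) = (1/eps)^2"
    proof -
      have "exp (2*L) = exp (L + L)" by (metis mult_2)
      also have "\<dots> = exp L * exp L" by (rule exp_add)
      finally show ?thesis using eL by (simp add: power2_eq_square)
    qed
  finally have i2: "(1/eps)^2 < (2::real)^K" .
  have i2': "2 / eps < 2 * eps * 2^K"
  proof -
    have "2 * eps * (1/eps)^2 = 2/eps" using e0 by (simp add: field_simps power2_eq_square)
    moreover have "2 * eps * (1/eps)^2 < 2 * eps * 2^K"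
      using i2 e0 by (intro mult_strict_left_mono) auto
    ultimately show ?thesis by simp
  qed
  have "a \<le> (3 + 2*L) * 4"
  proof -
    have "a \<le> (3 + 2*L) / ln (4/3)" using a_def l4 l43 by (simp add: divide_right_mono)
    also have "\<dots> \<le> (3 + 2*L) / (1/4)" using l43 L0
      by (intro divide_left_mono) auto
    finally show ?thesis by simp
  qed
  moreover have "b \<le> 2*L * 2"
  proof -
    have "2*L \<le> 4*L * ln 2" using mult_left_mono[of "1/2" "ln 2" "4*L"] L0 l2 by simp
    moreover have "ln (2::real) > 0" by simp
    ultimately show ?thesis using b_def by (simp add: pos_divide_le_eq)
  qed
  ultimately have "real (k + K + 2) \<le> 20 * (1 + L)" using ka Kb L0 by simp
  thus ?thesis using i1' i2' L_def by blast
qed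

theorem lemmaA7:
  "\<exists>C > 0. \<forall>(eps::real) (f::real \<Rightarrow> real) (f'::real \<Rightarrow> real) (x0::real).
     0 < eps \<and> eps < 1 \<and>
     (\<forall>x. (f has_real_derivative f' x) (at x)) \<and>
     (\<forall>x y. \<bar>f' x - f' y\<bar> \<le> \<bar>x - y\<bar>) \<and>
     (\<forall>x. f x \<ge> 0) \<and> f x0 \<le> 1 \<and> f' x0 \<le> - eps
     \<longrightarrow> (\<exists>n r Q. dgap f f' eps n x0 = Some (r, Q) \<and>
            real (card Q) \<le> C * (1 + ln (1 / eps)) \<and>
            (case r of
               Stationary z \<Rightarrow> \<bar>f' z\<bar> < eps
             | Base x \<Rightarrow> f x \<le> f x0 \<and> f' x \<le> - eps \<and>
                         f (x + 2 / eps) \<ge> 3 / 4 * f x))"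
proof (intro exI[of _ "20::real"] conjI allI impI)
  show "(0::real) < 20" by simp
next
  fix eps :: real and f f' :: "real \<Rightarrow> real" and x0 :: real
  assume H: "0 < eps \<and> eps < 1 \<and>
     (\<forall>x. (f has_real_derivative f' x) (at x)) \<and>
     (\<forall>x y. \<bar>f' x - f' y\<bar> \<le> \<bar>x - y\<bar>) \<and>
     (\<forall>x. f x \<ge> 0) \<and> f x0 \<le> 1 \<and> f' x0 \<le> - eps"
  obtain k K where kK: "1 < eps^2/4 * (4/3)^k" "2 / eps < 2 * eps * 2^K"
     "real (k + K + 2) \<le> 20 * (1 + ln (1 / eps))"
    using main_bound H by blast
  have fx0: "f x0 < eps^2/4 * (4/3)^k" using kK H by linarith
  obtain r Q where rq: "dgap f f' eps (k+K) x0 = Some (r, Q)" "finite Q" "card Q \<le> k + K + 2"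
     "(case r of Stationary z \<Rightarrow> \<bar>f' z\<bar> < eps
        | Base x' \<Rightarrow> f x' \<le> f x0 \<and> f' x' \<le> - eps \<and> f (x' + 2 / eps) \<ge> 3 / 4 * f x')"
    using dgap_ok[of f f' eps K x0 k "k+K"] H kK(2) fx0 by blast
  have "real (card Q) \<le> 20 * (1 + ln (1 / eps))"
    using rq(3) kK(3) by (meson of_nat_le_iff order_trans)
  thus "\<exists>n r Q. dgap f f' eps n x0 = Some (r, Q) \<and>
            real (card Q) \<le> 20 * (1 + ln (1 / eps)) \<and>
            (case r of
               Stationary z \<Rightarrow> \<bar>f' z\<bar> < eps
             | Base x \<Rightarrow> f x \<le> f x0 \<and> f' x \<le> - eps \<and>
                         f (x + 2 / eps) \<ge> 3 / 4 * f x)"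
    using rq by blast
qed

end
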